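(* Let $\mathcal{G}=(\mathcal{V},\mathcal{A})$ be the information-flow graph of a single-sender single-uniprior index-coding instance with message lengths $q_1,\dots,q_n$. Then \[ \ell^*(\mathcal{G}) = \sum_{k \in \mathcal{V}} q_k - \sum_{i \in \mathcal{L}(\mathcal{G})} q_i - \sum_{\mathcal{V}_{S} \in \mathbb{V}} \min_{a \in \mathcal{V}_{S}} q_a, \] where $\mathbb{V}$ is the set of vertex sets of all leaf SCCs of $\mathcal{G}$. Furthermore, this optimal length is achieved by a linear index code, i.e., one whose encoding function is linear over $\mathrm{GF}(2)$ (each codeword bit is an XOR of message bits).
   Context: Single-sender single-uniprior index coding: there are $n$ receivers and $n$ independent messages $x_1,\dots,x_n$; message $x_i$ consists of $q_i\ge 1$ bits, each independently uniformly distributed on $\{0,1\}$. A single sender knows all messages. Receiver $i$ knows $x_i$ a priori and requests a set $\mathcal{W}_i$ of messages with $x_i\notin\mathcal{W}_i$. The information-flow graph is the directed graph $\mathcal{G}=(\mathcal{V},\mathcal{A})$ with $\mathcal{V}=\{1,\dots,n\}$ and an arc $(j\to i)\in\mathcal{A}$ iff $x_j\in\mathcal{W}_i$. An index code of length $\ell$ consists of an encoding function $E:\{0,1\}^{\sum_i q_i}\to\{0,1\}^\ell$ and, for each receiver $i$, a decoding function $D_i$ such that $D_i(E(x_1,\dots,x_n),x_i)$ equals the tuple of messages in $\mathcal{W}_i$ for all values of the messages. $\ell^*(\mathcal{G})$ denotes the minimum length of an index code. A leaf vertex is a vertex with no outgoing arcs; $\mathcal{L}(\mathcal{G})$ is the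 set of leaf vertices. A strongly connected component (SCC) is a maximal subgraph in which every ordered pair of vertices is joined by a directed path inside the subgraph. A leaf SCC is an SCC with at least two vertices from which no arc goes to a vertex outside the SCC. *)

theory Defs
  imports Main
begin

text \<open>Vertices/receivers/messages are indexed by 0..<n. A message tuple is a function
  x :: nat => bool list, with x i the q i bits of message i (and x i = [] for i >= n).
  The information-flow graph is a set A of arcs (j,i): (j,i) in A iff receiver i requests x_j.\<close>

definition valid_msgs :: "nat \<Rightarrow> (nat \<Rightarrow> nat) \<Rightarrow> (nat \<Rightarrow> bool list) \<Rightarrow> bool" where
  "valid_msgs n q x \<longleftrightarrow> (\<forall>i<n. length (x i) = q i) \<and> (\<forall>i\<ge>n. x i = [])"

definition info_flow_graph :: "nat \<Rightarrow> (nat \<times> nat) set \<Rightarrow> bool" where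
  "info_flow_graph n A \<longleftrightarrow> A \<subseteq> {0..<n} \<times> {0..<n} \<and> (\<forall>i. (i, i) \<notin> A)"

definition requested :: "(nat \<times> nat) set \<Rightarrow> nat \<Rightarrow> (nat \<Rightarrow> bool list) \<Rightarrow> (nat \<Rightarrow> bool list)" where
  "requested A i x = (\<lambda>j. if (j, i) \<in> A then x j else [])"

definition index_code ::
  "nat \<Rightarrow> (nat \<Rightarrow> nat) \<Rightarrow> (nat \<times> nat) set \<Rightarrow> nat
   \<Rightarrow> ((nat \<Rightarrow> bool list) \<Rightarrow> bool list)
   \<Rightarrow> (nat \<Rightarrow> bool list \<Rightarrow> bool list \<Rightarrow> (nat \<Rightarrow> bool list)) \<Rightarrow> bool" where
  "index_code n q A len E D \<longleftrightarrow>
     (\<forall>x. valid_msgs n q x \<longrightarrow> length (E x) = len) \<and>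
     (\<forall>i<n. \<forall>x. valid_msgs n q x \<longrightarrow> D i (E x) (x i) = requested A i x)"

definition opt_len :: "nat \<Rightarrow> (nat \<Rightarrow> nat) \<Rightarrow> (nat \<times> nat) set \<Rightarrow> nat" where
  "opt_len n q A = (LEAST len. \<exists>E D. index_code n q A len E D)"

definition xor_bits :: "(nat \<times> nat) set \<Rightarrow> (nat \<Rightarrow> bool list) \<Rightarrow> bool" where
  "xor_bits S x = odd (card {(i, j) \<in> S. x i ! j})"

definition linear_encoding ::
  "nat \<Rightarrow> (nat \<Rightarrow> nat) \<Rightarrow> ((nat \<Rightarrow> bool list) \<Rightarrow> bool list) \<Rightarrow> bool" where
  "linear_encoding n q E \<longleftrightarrow>
     (\<exists>L. (\<forall>S\<in>set L. S \<subseteq> {(i, j). i < n \<and> j < q i}) \<and>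
          (\<forall>x. valid_msgs n q x \<longrightarrow> E x = map (\<lambda>S. xor_bits S x) L))"

definition leaf_vertices :: "nat \<Rightarrow> (nat \<times> nat) set \<Rightarrow> nat set" where
  "leaf_vertices n A = {i. i < n \<and> (\<forall>j. (i, j) \<notin> A)}"

definition strongly_connected_in :: "(nat \<times> nat) set \<Rightarrow> nat set \<Rightarrow> bool" where
  "strongly_connected_in A C \<longleftrightarrow> (\<forall>u\<in>C. \<forall>v\<in>C. (u, v) \<in> (A \<inter> (C \<times> C))\<^sup>*)"

definition is_scc :: "nat \<Rightarrow> (nat \<times> nat) set \<Rightarrow> nat set \<Rightarrow> bool" where
  "is_scc n A C \<longleftrightarrow> C \<noteq> {} \<and> C \<subseteq> {0..<n} \<and> strongly_connected_in A C \<and>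
     (\<forall>C'. C \<subseteq> C' \<and> C' \<subseteq> {0..<n} \<and> strongly_connected_in A C' \<longrightarrow> C' = C)"

definition is_leaf_scc :: "nat \<Rightarrow> (nat \<times> nat) set \<Rightarrow> nat set \<Rightarrow> bool" where
  "is_leaf_scc n A C \<longleftrightarrow> is_scc n A C \<and> card C \<ge> 2 \<and> (\<forall>u\<in>C. \<forall>v. (u, v) \<in> A \<longrightarrow> v \<in> C)"

definition leaf_sccs :: "nat \<Rightarrow> (nat \<times> nat) set \<Rightarrow> nat set set" where
  "leaf_sccs n A = {C. is_leaf_scc n A C}"

end

theory Submission
  imports Defs
begin

locale ifg =
  fixes n :: nat and A :: "(nat \<times> nat) set" and q :: "nat \<Rightarrow> nat"
  assumes g: "info_flow_graph n A"
begin

lemma A_sub: "(a,b) \<in> A \<Longrightarrow> a < n \<and> b < n"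
  using g unfolding info_flow_graph_def by auto

lemma noloop: "(a,a) \<notin> A"
  using g unfolding info_flow_graph_def by auto

lemma reach_lt: "(a,b) \<in> A\<^sup>* \<Longrightarrow> a < n \<Longrightarrow> b < n"
  by (induction rule: rtrancl_induct) (auto dest: A_sub)

definition closed :: "nat set \<Rightarrow> bool" where
  "closed C \<longleftrightarrow> (\<forall>u\<in>C. \<forall>v. (u,v) \<in> A \<longrightarrow> v \<in> C)"

lemma closed_reach:
  assumes "closed C" "a \<in> C" "(a,b) \<in> A\<^sup>*"
  shows "(a,b) \<in> (A \<inter> C \<times> C)\<^sup>* \<and> b \<in> C"
  using assms(3)
proof (induction rule: rtrancl_induct)
  case base then show ?case using assms by auto
next
  case (step y z)
  then have "z \<in> C" using assms(1) unfolding closed_def by auto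
  with step show ?case by (meson IntI SigmaI rtrancl.rtrancl_into_rtrancl)
qed

definition R :: "nat \<Rightarrow> nat set" where "R v = {w. (v,w) \<in> A\<^sup>*}"

lemma R_fin: "v < n \<Longrightarrow> finite (R v)"
  by (rule finite_subset[of _ "{..<n}"]) (auto simp: R_def dest: reach_lt)

lemma reach_sink:
  assumes "v < n"
  shows "\<exists>u. (v,u) \<in> A\<^sup>* \<and> (\<forall>w. (u,w) \<in> A\<^sup>* \<longrightarrow> (w,u) \<in> A\<^sup>*)"
proof -
  have "\<exists>u. (v,u) \<in> A\<^sup>* \<and> card (R u) = m" if "m = card (R v)" for m
    using that by auto
  then obtain u where u: "(v,u) \<in> A\<^sup>*" and mn: "\<forall>u'. (v,u') \<in> A\<^sup>* \<longrightarrow> card (R u) \<le> card (R u')"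
    using ex_has_least_nat[of "\<lambda>u. (v,u) \<in> A\<^sup>*" v "\<lambda>u. card (R u)"] by auto
  have un: "u < n" using u assms reach_lt by blast
  show ?thesis
  proof (intro exI conjI allI impI)
    show "(v,u) \<in> A\<^sup>*" by fact
    fix w assume w: "(u,w) \<in> A\<^sup>*"
    have sub: "R w \<subseteq> R u" using w unfolding R_def by auto
    have "card (R u) \<le> card (R w)" using mn u w by (meson rtrancl_trans)
    then have "R w = R u" using sub R_fin[OF un] by (meson card_mono card_subset_eq le_antisym)
    then show "(w,u) \<in> A\<^sup>*" unfolding R_def by auto
  qed
qed

lemma sink_scc:
  assumes un: "u < n" and sk: "\<forall>w. (u,w) \<in> A\<^sup>* \<longrightarrow> (w,u) \<in> A\<^sup>*" and w: "(u,w) \<in> A"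
  shows "R u \<in> leaf_sccs n A"
proof -
  let ?C = "R u"
  have cl: "closed ?C" unfolding closed_def R_def
    by (auto intro: rtrancl_into_rtrancl)
  have sub: "?C \<subseteq> {0..<n}" using un by (auto simp: R_def dest: reach_lt)
  have sc: "strongly_connected_in A ?C"
    unfolding strongly_connected_in_def
  proof (intro ballI)
    fix a b assume a: "a \<in> ?C" and b: "b \<in> ?C"
    have "(a,b) \<in> A\<^sup>*" using a b sk unfolding R_def by (meson mem_Collect_eq rtrancl_trans)
    then show "(a,b) \<in> (A \<inter> ?C \<times> ?C)\<^sup>*" using closed_reach[OF cl a] by blast
  qed
  have max: "C' = ?C" if "?C \<subseteq> C'" "C' \<subseteq> {0..<n}" "strongly_connected_in A C'" for C'
  proof
    show "C' \<subseteq> ?C"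
    proof
      fix c assume c: "c \<in> C'"
      have "u \<in> C'" using that(1) by (auto simp: R_def)
      then have "(u,c) \<in> (A \<inter> C' \<times> C')\<^sup>*" using that(3) c unfolding strongly_connected_in_def by auto
      then have "(u,c) \<in> A\<^sup>*" using rtrancl_mono[of "A \<inter> C' \<times> C'" A] by auto
      then show "c \<in> ?C" by (simp add: R_def)
    qed
  qed (use that in auto)
  have "u \<in> ?C" "w \<in> ?C" "u \<noteq> w" using w noloop by (auto simp: R_def)
  then have "card {u,w} \<le> card ?C" using R_fin[OF un] by (intro card_mono) auto
  then have "card ?C \<ge> 2" using \<open>u \<noteq> w\<close> by simp
  show ?thesis unfolding leaf_sccs_def is_leaf_scc_def is_scc_def
    using sub sc max \<open>card ?C \<ge> 2\<close> cl \<open>u \<in> ?C\<close> unfolding closed_def by blast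
qed

lemma leaf_scc_props:
  assumes "C \<in> leaf_sccs n A"
  shows "C \<subseteq> {0..<n}" "finite C" "C \<noteq> {}" "closed C" "strongly_connected_in A C" "card C \<ge> 2"
  using assms unfolding leaf_sccs_def is_leaf_scc_def is_scc_def closed_def
  by (auto intro: finite_subset)

lemma leaf_scc_disj:
  assumes "C1 \<in> leaf_sccs n A" "C2 \<in> leaf_sccs n A" "w \<in> C1" "w \<in> C2"
  shows "C1 = C2"
proof -
  have "C2 \<subseteq> C1"
  proof
    fix c assume c: "c \<in> C2"
    have "(w,c) \<in> (A \<inter> C2 \<times> C2)\<^sup>*" using leaf_scc_props(5)[OF assms(2)] assms(4) c
      unfolding strongly_connected_in_def by auto
    then have "(w,c) \<in> A\<^sup>*" using rtrancl_mono[of "A \<inter> C2 \<times> C2" A] by auto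
    then show "c \<in> C1" using closed_reach[OF leaf_scc_props(4)[OF assms(1)] assms(3)] by blast
  qed
  then show ?thesis using assms(2) leaf_scc_props(1,5)[OF assms(1)]
    unfolding leaf_sccs_def is_leaf_scc_def is_scc_def by blast
qed

lemma leaf_scc_out:
  assumes "C \<in> leaf_sccs n A" "v \<in> C"
  shows "\<exists>w\<in>C. (v,w) \<in> A"
proof -
  have "\<exists>w\<in>C. w \<noteq> v"
  proof (rule ccontr)
    assume "\<not> ?thesis" then have "C \<subseteq> {v}" by auto
    then have "card C \<le> card {v}" by (intro card_mono) auto
    then show False using leaf_scc_props(6)[OF assms(1)] by simp
  qed
  then obtain w where w: "w \<in> C" "w \<noteq> v" by auto
  then have "(v,w) \<in> (A \<inter> C \<times> C)\<^sup>*" using leaf_scc_props(5)[OF assms(1)] assms(2)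
    unfolding strongly_connected_in_def by auto
  then show ?thesis using w(2) by (cases rule: converse_rtranclE) auto
qed

lemma leaf_scc_not_leaf:
  assumes "C \<in> leaf_sccs n A" "v \<in> C"
  shows "v \<notin> leaf_vertices n A"
  using leaf_scc_out[OF assms] unfolding leaf_vertices_def by auto

definition rep :: "nat set \<Rightarrow> nat" where
  "rep C = (SOME a. a \<in> C \<and> q a = Min (q ` C))"

lemma rep:
  assumes "C \<in> leaf_sccs n A"
  shows "rep C \<in> C" "q (rep C) = Min (q ` C)" "\<And>b. b \<in> C \<Longrightarrow> q (rep C) \<le> q b"
proof -
  have "finite C" "C \<noteq> {}" using leaf_scc_props[OF assms] by auto
  then have "Min (q ` C) \<in> q ` C" by simp
  then have "\<exists>a. a \<in> C \<and> q a = Min (q ` C)" by auto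
  then have *: "rep C \<in> C \<and> q (rep C) = Min (q ` C)" unfolding rep_def by (rule someI_ex)
  then show "rep C \<in> C" "q (rep C) = Min (q ` C)" by auto
  show "\<And>b. b \<in> C \<Longrightarrow> q (rep C) \<le> q b" using * \<open>finite C\<close> by simp
qed

lemma rep_inj: "inj_on rep (leaf_sccs n A)"
  by (intro inj_onI) (metis leaf_scc_disj rep(1))

definition K :: "nat set" where
  "K = leaf_vertices n A \<union> rep ` leaf_sccs n A"

lemma reach_K:
  assumes "v < n" shows "\<exists>k\<in>K. (v,k) \<in> A\<^sup>*"
proof -
  obtain u where u: "(v,u) \<in> A\<^sup>*" "\<forall>w. (u,w) \<in> A\<^sup>* \<longrightarrow> (w,u) \<in> A\<^sup>*"
    using reach_sink[OF assms] by blast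
  have un: "u < n" using u(1) assms reach_lt by blast
  show ?thesis
  proof (cases "\<exists>w. (u,w) \<in> A")
    case False
    then have "u \<in> K" using un by (auto simp: K_def leaf_vertices_def)
    then show ?thesis using u by blast
  next
    case True
    then obtain w where "(u,w) \<in> A" by auto
    then have C: "R u \<in> leaf_sccs n A" using sink_scc un u(2) by blast
    then have "rep (R u) \<in> R u" by (rule rep)
    then have "(v, rep (R u)) \<in> A\<^sup>*" using u(1) by (auto simp: R_def)
    moreover have "rep (R u) \<in> K" using C by (auto simp: K_def)
    ultimately show ?thesis by blast
  qed
qed

lemma fin_sccs: "finite (leaf_sccs n A)"
  by (rule finite_subset[of _ "Pow {0..<n}"]) (auto dest: leaf_scc_props(1))

lemma K_sum: "(\<Sum>k\<in>K. q k) = (\<Sum>i\<in>leaf_vertices n A. q i) + (\<Sum>C\<in>leaf_sccs n A. Min (q ` C))"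
proof -
  have fl: "finite (leaf_vertices n A)" by (rule finite_subset[of _ "{..<n}"]) (auto simp: leaf_vertices_def)
  have dj: "leaf_vertices n A \<inter> rep ` leaf_sccs n A = {}"
    using leaf_scc_not_leaf rep(1) by blast
  have "(\<Sum>k\<in>K. q k) = (\<Sum>i\<in>leaf_vertices n A. q i) + (\<Sum>k\<in>rep ` leaf_sccs n A. q k)"
    unfolding K_def using fl fin_sccs dj by (simp add: sum.union_disjoint)
  also have "(\<Sum>k\<in>rep ` leaf_sccs n A. q k) = (\<Sum>C\<in>leaf_sccs n A. q (rep C))"
    using rep_inj by (simp add: sum.reindex)
  also have "\<dots> = (\<Sum>C\<in>leaf_sccs n A. Min (q ` C))" using rep(2) by (simp cong: sum.cong)
  finally show ?thesis .
qed

lemma K_sub: "K \<subseteq> {..<n}"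
  unfolding K_def leaf_vertices_def using rep(1) leaf_scc_props(1) by fastforce

end
lemma bl_card: "finite {w::bool list. length w = k} \<and> card {w::bool list. length w = k} = 2 ^ k"
  using finite_lists_length_eq[of "UNIV::bool set" k] card_lists_length_eq[of "UNIV::bool set" k]
  by simp

lemma card_valid: "finite {x. valid_msgs m q x} \<and> card {x. valid_msgs m q x} = 2 ^ (\<Sum>k<m. q k)"
proof (induction m)
  case 0
  have "{x. valid_msgs 0 q x} = {\<lambda>_. []}" by (auto simp: valid_msgs_def)
  then show ?case by simp
next
  case (Suc m)
  let ?f = "\<lambda>(x, w). x(m := w)"
  let ?P = "{x. valid_msgs m q x} \<times> {w::bool list. length w = q m}"
  have inj: "inj_on ?f ?P"
  proof (rule inj_onI, clarsimp)
    fix x w x' w'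
    assume v: "valid_msgs m q x" "valid_msgs m q x'" and e: "x(m := w) = x'(m := w')"
    have "w = w'" using fun_cong[OF e, of m] by simp
    moreover have "x = x'"
    proof
      fix i show "x i = x' i"
        using fun_cong[OF e, of i] v by (cases "i = m") (auto simp: valid_msgs_def)
    qed
    ultimately show "x = x' \<and> w = w'" by simp
  qed
  have img: "?f ` ?P = {x. valid_msgs (Suc m) q x}"
  proof
    show "?f ` ?P \<subseteq> {x. valid_msgs (Suc m) q x}"
      by (auto simp: valid_msgs_def less_Suc_eq)
    show "{x. valid_msgs (Suc m) q x} \<subseteq> ?f ` ?P"
    proof
      fix y assume y: "y \<in> {x. valid_msgs (Suc m) q x}"
      have "(y(m := []), y m) \<in> ?P" using y by (auto simp: valid_msgs_def)
      moreover have "y = ?f (y(m := []), y m)" by simp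
      ultimately show "y \<in> ?f ` ?P" by blast
    qed
  qed
  have "card {x. valid_msgs (Suc m) q x} = card ?P" using img card_image[OF inj] by simp
  also have "\<dots> = 2 ^ (\<Sum>k<m. q k) * 2 ^ q m" using Suc bl_card[of "q m"] by (simp add: card_cartesian_product)
  moreover have "finite {x. valid_msgs (Suc m) q x}"
    using img Suc bl_card[of "q m"] by (metis finite_SigmaI finite_imageI)
  ultimately show ?case by (simp add: power_add)
qed

lemma concat_map_eq:
  "\<forall>k\<in>set ks. length (x k) = length (y k) \<Longrightarrow> concat (map x ks) = concat (map y ks) \<Longrightarrow> map x ks = map y ks"
  by (induction ks) auto

context ifg
begin

lemma sep_lower:
  assumes ic: "index_code n q A len E D" and vx: "valid_msgs n q x" and vy: "valid_msgs n q y"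
    and e: "E x = E y" and kk: "\<forall>k\<in>K. x k = y k"
  shows "x = y"
proof -
  have arc: "x j = y j" if "(j,i) \<in> A" "x i = y i" for i j
  proof -
    have i: "i < n" using that A_sub by blast
    have "requested A i x = requested A i y"
      using ic i vx vy e that(2) unfolding index_code_def by metis
    then have "requested A i x j = requested A i y j" by simp
    then show ?thesis using that(1) by (simp add: requested_def)
  qed
  have path: "x v = y v" if "(v,u) \<in> A\<^sup>*" "x u = y u" for v u
    using that(1)
  proof (induction rule: converse_rtrancl_induct)
    case base then show ?case using that(2) by simp
  next
    case (step v w) then show ?case using arc by blast
  qed
  show "x = y"
  proof
    fix v show "x v = y v"
    proof (cases "v < n")
      case True
      then obtain k where "k \<in> K" "(v,k) \<in> A\<^sup>*" using reach_K by blast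
      then show ?thesis using path kk by blast
    next
      case False then show ?thesis using vx vy by (simp add: valid_msgs_def)
    qed
  qed
qed

lemma lower:
  assumes ic: "index_code n q A len E D"
  shows "(\<Sum>k<n. q k) \<le> len + (\<Sum>k\<in>K. q k)"
proof -
  define Kl where "Kl = sorted_list_of_set K"
  have finK: "finite K" using K_sub finite_subset by blast
  have setKl: "set Kl = K" "distinct Kl" using finK by (auto simp: Kl_def)
  define G where "G x = E x @ concat (map x Kl)" for x :: "nat \<Rightarrow> bool list"
  let ?V = "{x. valid_msgs n q x}"
  let ?T = "{w::bool list. length w = len + (\<Sum>k\<in>K. q k)}"
  have lenc: "length (concat (map x Kl)) = (\<Sum>k\<in>K. q k)" if "valid_msgs n q x" for x
  proof -
    have "length (concat (map x Kl)) = sum_list (map (\<lambda>k. length (x k)) Kl)"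
      by (simp add: length_concat o_def)
    also have "\<dots> = sum_list (map q Kl)"
      using that setKl K_sub by (intro arg_cong[where f=sum_list] map_cong) (auto simp: valid_msgs_def)
    also have "\<dots> = (\<Sum>k\<in>K. q k)" using setKl by (simp add: sum_list_distinct_conv_sum_set)
    finally show ?thesis .
  qed
  have inj: "inj_on G ?V"
  proof (rule inj_onI)
    fix x y assume x: "x \<in> ?V" and y: "y \<in> ?V" and g: "G x = G y"
    have lx: "length (E x) = len" "length (E y) = len" using ic x y unfolding index_code_def by auto
    have e: "E x = E y" and c: "concat (map x Kl) = concat (map y Kl)"
      using g lx unfolding G_def by (auto simp: append_eq_append_conv)
    have "map x Kl = map y Kl"
      using c x y setKl K_sub by (intro concat_map_eq) (auto simp: valid_msgs_def)
    then have "\<forall>k\<in>K. x k = y k" using setKl by (auto simp: map_eq_conv)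
    then show "x = y" using sep_lower[OF ic] x y e by blast
  qed
  have sub: "G ` ?V \<subseteq> ?T"
    using ic lenc unfolding G_def index_code_def by auto
  have "card ?V \<le> card ?T"
    using card_inj_on_le[OF inj sub] bl_card by blast
  then have "(2::nat) ^ (\<Sum>k<n. q k) \<le> 2 ^ (len + (\<Sum>k\<in>K. q k))"
    using card_valid[of n] bl_card by simp
  then show ?thesis by (simp add: power_le_imp_le_exp)
qed

end

lemma xor1: "xor_bits {(v,k)} x = (x v ! k)"
proof -
  have "{(i, j). (i,j) \<in> {(v,k)} \<and> x i ! j} = (if x v ! k then {(v,k)} else {})" by auto
  then show ?thesis unfolding xor_bits_def by simp
qed

lemma xor2: assumes "v \<noteq> a" shows "xor_bits {(v,k),(a,k)} x = (x v ! k \<noteq> x a ! k)"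
proof -
  have "{(i, j). (i,j) \<in> {(v,k),(a,k)} \<and> x i ! j} =
        (if x v ! k then {(v,k)} else {}) \<union> (if x a ! k then {(a,k)} else {})" by auto
  then show ?thesis unfolding xor_bits_def using assms by auto
qed

context ifg
begin

definition inS :: "nat \<Rightarrow> bool" where "inS v = (\<exists>C\<in>leaf_sccs n A. v \<in> C)"
definition sc :: "nat \<Rightarrow> nat set" where "sc v = (SOME C. C \<in> leaf_sccs n A \<and> v \<in> C)"
definition bitset :: "nat \<Rightarrow> nat \<Rightarrow> (nat \<times> nat) set" where
  "bitset v k = (if inS v \<and> k < q (rep (sc v)) then {(v,k),(rep (sc v),k)} else {(v,k)})"
definition blk :: "nat \<Rightarrow> (nat \<times> nat) set list" where
  "blk v = (if v \<in> K then [] else map (bitset v) [0..<q v])"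
definition LL :: "(nat \<times> nat) set list" where "LL = concat (map blk [0..<n])"
definition E0 :: "(nat \<Rightarrow> bool list) \<Rightarrow> bool list" where "E0 x = map (\<lambda>S. xor_bits S x) LL"
definition D0 :: "nat \<Rightarrow> bool list \<Rightarrow> bool list \<Rightarrow> (nat \<Rightarrow> bool list)" where
  "D0 i c xi = requested A i (SOME y. valid_msgs n q y \<and> E0 y = c \<and> y i = xi)"

lemma sc_eq: "C \<in> leaf_sccs n A \<Longrightarrow> v \<in> C \<Longrightarrow> sc v = C"
proof -
  assume a: "C \<in> leaf_sccs n A" "v \<in> C"
  then have "\<exists>C. C \<in> leaf_sccs n A \<and> v \<in> C" by blast
  then have "sc v \<in> leaf_sccs n A \<and> v \<in> sc v" unfolding sc_def by (rule someI_ex)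
  then show "sc v = C" using a leaf_scc_disj by blast
qed

lemma mem_LL: "v < n \<Longrightarrow> v \<notin> K \<Longrightarrow> k < q v \<Longrightarrow> bitset v k \<in> set LL"
  unfolding LL_def blk_def by force

lemma bitE: "E0 x = E0 y \<Longrightarrow> S \<in> set LL \<Longrightarrow> xor_bits S x = xor_bits S y"
  unfolding E0_def by (simp add: map_eq_conv)

lemma LL_sub: "S \<in> set LL \<Longrightarrow> S \<subseteq> {(i, j). i < n \<and> j < q i}"
proof -
  assume "S \<in> set LL"
  then obtain v k where v: "v < n" "k < q v" "S = bitset v k"
    unfolding LL_def blk_def by (auto split: if_splits)
  show ?thesis
  proof (cases "inS v \<and> k < q (rep (sc v))")
    case True
    then obtain C where C: "C \<in> leaf_sccs n A" "v \<in> C" unfolding inS_def by blast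
    then have "rep (sc v) < n" using sc_eq rep(1) leaf_scc_props(1) by fastforce
    then show ?thesis using v True unfolding bitset_def by auto
  next
    case False then show ?thesis using v unfolding bitset_def by auto
  qed
qed

lemma rep_notK: assumes "C \<in> leaf_sccs n A" "w \<in> C" "w \<noteq> rep C" shows "w \<notin> K"
proof
  assume "w \<in> K"
  moreover have "w \<notin> leaf_vertices n A" using leaf_scc_not_leaf assms by blast
  ultimately obtain C' where "C' \<in> leaf_sccs n A" "w = rep C'" unfolding K_def by blast
  then show False using assms rep(1) leaf_scc_disj by metis
qed

lemma sep_upper:
  assumes vx: "valid_msgs n q x" and vy: "valid_msgs n q y" and e: "E0 x = E0 y"
    and ji: "(j,i) \<in> A" and xi: "x i = y i"
  shows "x j = y j"
proof -
  have jn: "j < n" "i < n" using ji A_sub by auto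
  have jnl: "j \<notin> leaf_vertices n A" using ji unfolding leaf_vertices_def by auto
  have bit: "x v ! k = y v ! k" if "v < n" "v \<notin> K" "k < q v" "\<not> (inS v \<and> k < q (rep (sc v)))" for v k
    using bitE[OF e mem_LL[OF that(1-3)]] that(4) by (simp add: bitset_def xor1)
  show ?thesis
  proof (cases "inS j")
    case False
    have "j \<notin> K"
    proof
      assume "j \<in> K" then obtain C where "C \<in> leaf_sccs n A" "j = rep C"
        using jnl unfolding K_def by blast
      then show False using False rep(1) unfolding inS_def by blast
    qed
    then show ?thesis using bit[of j] False jn vx vy
      by (intro nth_equalityI) (auto simp: valid_msgs_def)
  next
    case True
    then obtain C where C: "C \<in> leaf_sccs n A" "j \<in> C" unfolding inS_def by blast
    have iC: "i \<in> C" using leaf_scc_props(4)[OF C(1)] C(2) ji unfolding closed_def by blast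
    define a where "a = rep C"
    have aC: "a \<in> C" and an: "a < n" using rep(1)[OF C(1)] leaf_scc_props(1)[OF C(1)] by (auto simp: a_def)
    have scw: "sc w = C" if "w \<in> C" for w using sc_eq C(1) that by blast
    have inSw: "inS w" if "w \<in> C" for w using C(1) that unfolding inS_def by blast
    have wn: "w < n" if "w \<in> C" for w using leaf_scc_props(1)[OF C(1)] that by auto
    have xorb: "xor_bits {(w,k),(a,k)} x = xor_bits {(w,k),(a,k)} y"
      if "w \<in> C" "w \<noteq> a" "k < q w" "k < q a" for w k
    proof -
      have "bitset w k = {(w,k),(a,k)}" using that scw inSw unfolding bitset_def a_def by auto
      moreover have "w \<notin> K" using rep_notK C(1) that(1,2) unfolding a_def by blast
      ultimately show ?thesis using bitE[OF e mem_LL[OF wn[OF that(1)] _ that(3)]] by simp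
    qed
    have plain: "x w ! k = y w ! k" if "w \<in> C" "w \<noteq> a" "k < q w" "\<not> k < q a" for w k
      using bit[of w k] that rep_notK[OF C(1)] scw wn unfolding a_def by auto
    have qa: "q a \<le> q w" if "w \<in> C" for w using rep(3)[OF C(1) that] by (simp add: a_def)
    have xa: "x a = y a"
    proof (cases "i = a")
      case True then show ?thesis using xi by simp
    next
      case False
      show ?thesis
      proof (rule nth_equalityI)
        show "length (x a) = length (y a)" using vx vy an by (simp add: valid_msgs_def)
        fix k assume "k < length (x a)"
        then have k: "k < q a" using vx an by (simp add: valid_msgs_def)
        have "k < q i" using k qa[OF iC] by simp
        from xorb[OF iC False this k] show "x a ! k = y a ! k" using False xi by (simp add: xor2) blast
      qed
    qed
    show ?thesis
    proof (cases "j = a")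
      case True then show ?thesis using xa by simp
    next
      case False
      show ?thesis
      proof (rule nth_equalityI)
        show "length (x j) = length (y j)" using vx vy jn by (simp add: valid_msgs_def)
        fix k assume "k < length (x j)"
        then have k: "k < q j" using vx jn by (simp add: valid_msgs_def)
        show "x j ! k = y j ! k"
        proof (cases "k < q a")
          case True
          from xorb[OF C(2) False k True] show ?thesis using False xa by (simp add: xor2) blast
        next
          case False2: False
          show ?thesis using plain[OF C(2) False k False2] .
        qed
      qed
    qed
  qed
qed

lemma code0: "index_code n q A (length LL) E0 D0"
  unfolding index_code_def
proof (intro conjI allI impI)
  fix x assume "valid_msgs n q x" then show "length (E0 x) = length LL" by (simp add: E0_def)
next
  fix i x assume i: "i < n" and vx: "valid_msgs n q x"
  let ?P = "\<lambda>y. valid_msgs n q y \<and> E0 y = E0 x \<and> y i = x i"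
  have "?P x" using vx by simp
  then have sy: "?P (SOME y. ?P y)" by (rule someI[of ?P x])
  define y where "y = (SOME y. ?P y)"
  have vy: "valid_msgs n q y" and ey: "E0 y = E0 x" and yi: "y i = x i" using sy unfolding y_def by auto
  have "requested A i y = requested A i x"
  proof
    fix j show "requested A i y j = requested A i x j"
      unfolding requested_def using sep_upper[OF vy vx ey _ yi] by simp
  qed
  then show "D0 i (E0 x) (x i) = requested A i x"
    unfolding D0_def y_def by simp
qed

lemma lin0: "linear_encoding n q E0"
  unfolding linear_encoding_def E0_def using LL_sub by blast

lemma len0: "length LL + (\<Sum>k\<in>K. q k) = (\<Sum>k<n. q k)"
proof -
  have "length LL = (\<Sum>v\<leftarrow>[0..<n]. length (blk v))" by (simp add: LL_def length_concat o_def)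
  also have "\<dots> = (\<Sum>v<n. length (blk v))"
    by (simp add: sum_list_distinct_conv_sum_set atLeast0LessThan)
  also have "\<dots> = (\<Sum>v<n. if v \<in> K then 0 else q v)" by (intro sum.cong) (auto simp: blk_def)
  finally have 1: "length LL = (\<Sum>v<n. if v \<in> K then 0 else q v)" .
  have 2: "(\<Sum>v<n. if v \<in> K then q v else 0) = (\<Sum>k\<in>K. q k)"
    using K_sub by (simp add: sum.inter_restrict[symmetric] Int_absorb1 flip: sum.If_cases)
  have "(\<Sum>v<n. if v \<in> K then 0 else q v) + (\<Sum>v<n. if v \<in> K then q v else 0) = (\<Sum>k<n. q k)"
    by (simp add: sum.distrib[symmetric]) (intro sum.cong, auto)
  then show ?thesis using 1 2 by simp
qed

end

theorem theorem3:
  fixes n :: nat and q :: "nat \<Rightarrow> nat" and A :: "(nat \<times> nat) set"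
  assumes "info_flow_graph n A"
    and "\<forall>i<n. q i \<ge> 1"
  shows "int (opt_len n q A) =
           (\<Sum>k<n. int (q k)) - (\<Sum>i\<in>leaf_vertices n A. int (q i))
           - (\<Sum>C\<in>leaf_sccs n A. int (Min (q ` C)))
       \<and> (\<exists>E D. index_code n q A (opt_len n q A) E D \<and> linear_encoding n q E)"
proof -
  interpret ifg n A q by unfold_locales (rule assms(1))
  have low: "length LL \<le> len" if "index_code n q A len E D" for len E D
    using lower[OF that] len0 by linarith
  have opt: "opt_len n q A = length LL" unfolding opt_len_def
  proof (rule Least_equality)
    show "\<exists>E D. index_code n q A (length LL) E D" using code0 by blast
  qed (use low in blast)
  have nat_eq: "length LL + (\<Sum>i\<in>leaf_vertices n A. q i) + (\<Sum>C\<in>leaf_sccs n A. Min (q ` C)) = (\<Sum>k<n. q k)"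
    using len0 K_sum by simp
  have "int (length LL) = int (\<Sum>k<n. q k) - int (\<Sum>i\<in>leaf_vertices n A. q i) - int (\<Sum>C\<in>leaf_sccs n A. Min (q ` C))"
    using nat_eq by linarith
  then have "int (opt_len n q A) =
           (\<Sum>k<n. int (q k)) - (\<Sum>i\<in>leaf_vertices n A. int (q i))
           - (\<Sum>C\<in>leaf_sccs n A. int (Min (q ` C)))" using opt by (simp add: of_nat_sum)
  moreover have "\<exists>E D. index_code n q A (opt_len n q A) E D \<and> linear_encoding n q E"
    using code0 lin0 opt by auto
  ultimately show ?thesis by blast
qed

end
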